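(* Let $G$ be a graph, $V(G)=V_1\uplus\dots\uplus V_\ell$ a partition, $Z\subseteq V(G)$, and let $(\mathfrak T,\gamma)$ be the rooted decomposition of $G-Z$ into $2$-connected components. If $I_1,I_2$ are two distinct segments, then $B_Z(I_1)\cap B_Z(I_2)=\emptyset$.
   Context: A graph is 2-connected if it is connected and has no cut vertex (so $K_1$ and $K_2$ count as 2-connected); a 2-connected component of a graph is an inclusion-maximal vertex set inducing a 2-connected subgraph. Rooted decomposition: $\mathfrak T$ is a forest whose nodes $t$ correspond to the 2-connected components $\gamma(t)\subseteq V(G)\setminus Z$ of $G-Z$; it is obtained from the block-cut forest of $G-Z$ by fixing, in each connected component, a root block (say the lexicographically smallest), and letting the parent of a non-root block $C$ be the block containing the cut vertex that separates $C$ from the root (i.e. the grandparent of $C$ in the rooted block-cut forest). An $i$-segment is a connected component of $G[V_i\setminus Z]$; a segment is an $i$-segment for some $i$. For a segment $I$, $r_Z(I)$ is the unique node $t$ of $\mathfrak T$ closest to a root with $I\cap\gamma(t)\neq\emptyset$, and the body is $B_Z(I)=\{t\in V(\mathfrak T)\setminus\{r_Z(I)\}: I\cap\gamma(t)\ne\emptyset\}$. *)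

theory Defs
  imports Main
begin

text \<open>Simple graphs are given by a vertex set and a symmetric, irreflexive edge
predicate E. All notions below are relative to an induced vertex subset S.\<close>

definition conn :: "('a \<Rightarrow> 'a \<Rightarrow> bool) \<Rightarrow> 'a set \<Rightarrow> bool" where
  "conn E S \<longleftrightarrow> S \<noteq> {} \<and>
     (\<forall>x\<in>S. \<forall>y\<in>S. (\<lambda>a b. E a b \<and> a \<in> S \<and> b \<in> S)\<^sup>*\<^sup>* x y)"

definition comps :: "('a \<Rightarrow> 'a \<Rightarrow> bool) \<Rightarrow> 'a set \<Rightarrow> 'a set set" where
  "comps E S = {C. C \<subseteq> S \<and> conn E C \<and>
     (\<forall>D. C \<subseteq> D \<and> D \<subseteq> S \<and> conn E D \<longrightarrow> D = C)}"

text \<open>2-connected: connected and no cut vertex (K1 and K2 count as 2-connected).\<close>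
definition biconn :: "('a \<Rightarrow> 'a \<Rightarrow> bool) \<Rightarrow> 'a set \<Rightarrow> bool" where
  "biconn E S \<longleftrightarrow> conn E S \<and> (\<forall>v\<in>S. S - {v} \<noteq> {} \<longrightarrow> conn E (S - {v}))"

definition blocks :: "('a \<Rightarrow> 'a \<Rightarrow> bool) \<Rightarrow> 'a set \<Rightarrow> 'a set set" where
  "blocks E S = {C. C \<subseteq> S \<and> biconn E C \<and>
     (\<forall>D. C \<subseteq> D \<and> D \<subseteq> S \<and> biconn E D \<longrightarrow> D = C)}"

definition cut_vertex :: "('a \<Rightarrow> 'a \<Rightarrow> bool) \<Rightarrow> 'a set \<Rightarrow> 'a \<Rightarrow> bool" where
  "cut_vertex E S v \<longleftrightarrow> v \<in> S \<and> card (comps E (S - {v})) > card (comps E S)"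

definition bc_adj :: "('a \<Rightarrow> 'a \<Rightarrow> bool) \<Rightarrow> 'a set \<Rightarrow> ('a set + 'a) \<Rightarrow> ('a set + 'a) \<Rightarrow> bool" where
  "bc_adj E S x y \<longleftrightarrow> (\<exists>B v. (x = Inl B \<and> y = Inr v \<or> x = Inr v \<and> y = Inl B) \<and>
      B \<in> blocks E S \<and> cut_vertex E S v \<and> v \<in> B)"

definition bc_dist :: "('a \<Rightarrow> 'a \<Rightarrow> bool) \<Rightarrow> 'a set \<Rightarrow> ('a set + 'a) \<Rightarrow> ('a set + 'a) \<Rightarrow> nat" where
  "bc_dist E S x y = (LEAST n. (bc_adj E S ^^ n) x y)"

definition roots_ok :: "('a \<Rightarrow> 'a \<Rightarrow> bool) \<Rightarrow> 'a set \<Rightarrow> 'a set set \<Rightarrow> bool" where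
  "roots_ok E S Rts \<longleftrightarrow> Rts \<subseteq> blocks E S \<and>
     (\<forall>C\<in>blocks E S. \<exists>!R. R \<in> Rts \<and> (bc_adj E S)\<^sup>*\<^sup>* (Inl C) (Inl R))"

text \<open>Parent in the rooted decomposition: the grandparent in the rooted block-cut forest.\<close>
definition tparent :: "('a \<Rightarrow> 'a \<Rightarrow> bool) \<Rightarrow> 'a set \<Rightarrow> 'a set set \<Rightarrow> 'a set \<Rightarrow> 'a set \<Rightarrow> bool" where
  "tparent E S Rts C P \<longleftrightarrow> C \<in> blocks E S \<and> P \<in> blocks E S \<and> C \<notin> Rts \<and>
     (\<exists>R\<in>Rts. (bc_adj E S)\<^sup>*\<^sup>* (Inl C) (Inl R) \<and>
       (\<exists>v. bc_adj E S (Inl C) (Inr v) \<and> bc_adj E S (Inr v) (Inl P) \<and>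
            bc_dist E S (Inl R) (Inr v) + 1 = bc_dist E S (Inl R) (Inl C) \<and>
            bc_dist E S (Inl R) (Inl P) + 1 = bc_dist E S (Inl R) (Inr v)))"

definition tdepth :: "('a \<Rightarrow> 'a \<Rightarrow> bool) \<Rightarrow> 'a set \<Rightarrow> 'a set set \<Rightarrow> 'a set \<Rightarrow> nat" where
  "tdepth E S Rts C = (LEAST n. \<exists>R\<in>Rts. (tparent E S Rts ^^ n) C R)"

definition is_segment :: "('a \<Rightarrow> 'a \<Rightarrow> bool) \<Rightarrow> (nat \<Rightarrow> 'a set) \<Rightarrow> nat \<Rightarrow> 'a set \<Rightarrow> 'a set \<Rightarrow> bool" where
  "is_segment E Vs l Z I \<longleftrightarrow> (\<exists>i\<in>{1..l}. I \<in> comps E (Vs i - Z))"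

definition seg_root :: "('a \<Rightarrow> 'a \<Rightarrow> bool) \<Rightarrow> 'a set \<Rightarrow> 'a set set \<Rightarrow> 'a set \<Rightarrow> 'a set" where
  "seg_root E S Rts I = (THE t. t \<in> blocks E S \<and> I \<inter> t \<noteq> {} \<and>
     (\<forall>t'\<in>blocks E S. I \<inter> t' \<noteq> {} \<and> t' \<noteq> t \<longrightarrow> tdepth E S Rts t < tdepth E S Rts t'))"

definition seg_body :: "('a \<Rightarrow> 'a \<Rightarrow> bool) \<Rightarrow> 'a set \<Rightarrow> 'a set set \<Rightarrow> 'a set \<Rightarrow> 'a set set" where
  "seg_body E S Rts I = {t \<in> blocks E S. t \<noteq> seg_root E S Rts I \<and> I \<inter> t \<noteq> {}}"

end

theory Submission
  imports Defs "HOL-Library.Transitive_Closure_Table"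
begin


definition rs :: "('a \<Rightarrow> 'a \<Rightarrow> bool) \<Rightarrow> 'a set \<Rightarrow> 'a \<Rightarrow> 'a \<Rightarrow> bool" where
  "rs E T = (\<lambda>a b. E a b \<and> a \<in> T \<and> b \<in> T)"

lemma conn_alt: "conn E T \<longleftrightarrow> T \<noteq> {} \<and> (\<forall>x\<in>T. \<forall>y\<in>T. (rs E T)\<^sup>*\<^sup>* x y)"
  by (simp add: conn_def rs_def)

lemma reach_mono: "T \<subseteq> T' \<Longrightarrow> (rs E T)\<^sup>*\<^sup>* x y \<Longrightarrow> (rs E T')\<^sup>*\<^sup>* x y"
  by (rule mono_rtranclp[rule_format, of "rs E T" "rs E T'"]) (auto simp: rs_def)

lemma reach_in: "(rs E T)\<^sup>*\<^sup>* x y \<Longrightarrow> x \<in> T \<Longrightarrow> y \<in> T"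
  by (induction rule: rtranclp_induct) (auto simp: rs_def)

lemma reach_in2: "(rs E T)\<^sup>*\<^sup>* x y \<Longrightarrow> x \<noteq> y \<Longrightarrow> y \<in> T"
  by (induction rule: rtranclp_induct) (auto simp: rs_def)

lemma reach_in1: "(rs E T)\<^sup>*\<^sup>* x y \<Longrightarrow> x \<noteq> y \<Longrightarrow> x \<in> T"
  by (induction rule: converse_rtranclp_induct) (auto simp: rs_def)

lemma conn_single: "conn E {x}"
  by (simp add: conn_alt)

lemma biconn_single: "biconn E {x}"
  by (simp add: biconn_def conn_single)

lemma biconn_del: "biconn E A \<Longrightarrow> A - {w} \<noteq> {} \<Longrightarrow> conn E (A - {w})"
  by (cases "w \<in> A") (auto simp: biconn_def)

lemma path_succ: "rtrancl_path r x xs y \<Longrightarrow> successively r (x#xs) \<and> last (x#xs) = y"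
  by (induction rule: rtrancl_path.induct) (auto simp: successively_Cons)

locale sg =
  fixes E :: "'a \<Rightarrow> 'a \<Rightarrow> bool"
  assumes sym: "\<And>x y. E x y \<Longrightarrow> E y x"
begin

lemma reach_sym:
  shows "(rs E T)\<^sup>*\<^sup>* x y \<Longrightarrow> (rs E T)\<^sup>*\<^sup>* y x"
proof (induction rule: rtranclp_induct)
  case base then show ?case by simp
next
  case (step y z)
  then have "rs E T z y" using sym by (auto simp: rs_def)
  then show ?case using step(3) by (meson converse_rtranclp_into_rtranclp)
qed

lemma conn_hub:
  assumes "c \<in> T" "\<And>x. x \<in> T \<Longrightarrow> (rs E T)\<^sup>*\<^sup>* c x"
  shows "conn E T"
  unfolding conn_alt
proof (intro conjI ballI)
  show "T \<noteq> {}" using assms by auto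
  fix x y assume "x \<in> T" "y \<in> T"
  then show "(rs E T)\<^sup>*\<^sup>* x y" using assms reach_sym by (meson rtranclp_trans)
qed

lemma conn_Un:
  assumes "conn E A" "conn E B" "A \<inter> B \<noteq> {}"
  shows "conn E (A \<union> B)"
proof -
  obtain c where c: "c \<in> A" "c \<in> B" using assms(3) by auto
  have hA: "\<And>x. x \<in> A \<Longrightarrow> (rs E (A\<union>B))\<^sup>*\<^sup>* c x"
    using assms(1) c by (auto simp: conn_alt intro: reach_mono[of A])
  have hB: "\<And>x. x \<in> B \<Longrightarrow> (rs E (A\<union>B))\<^sup>*\<^sup>* c x"
    using assms(2) c by (auto simp: conn_alt intro: reach_mono[of B])
  show ?thesis using c hA hB by (intro conn_hub[of c]) auto
qed

lemma conn_edge: assumes "E a b" shows "conn E {a,b}"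
proof -
  have "rs E {a,b} a b" using assms by (auto simp: rs_def)
  then show ?thesis by (intro conn_hub[of a]) auto
qed

lemma biconn_edge: assumes "E a b" shows "biconn E {a,b}"
  using conn_edge[OF assms] unfolding biconn_def
  by (auto simp: insert_Diff_if conn_single)

lemma biconn_Un:
  assumes "biconn E A" "biconn E B" "a \<noteq> b" "a \<in> A" "b \<in> A" "a \<in> B" "b \<in> B"
  shows "biconn E (A \<union> B)"
  unfolding biconn_def
proof (intro conjI ballI impI)
  show "conn E (A \<union> B)" using assms by (intro conn_Un) (auto simp: biconn_def)
  fix w assume "w \<in> A \<union> B" "A \<union> B - {w} \<noteq> {}"
  obtain c where c: "c \<in> A" "c \<in> B" "c \<noteq> w" using assms by blast
  have "conn E (A - {w})" "conn E (B - {w})" using assms c by (auto intro!: biconn_del)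
  then have "conn E ((A - {w}) \<union> (B - {w}))" using c by (intro conn_Un) auto
  moreover have "(A - {w}) \<union> (B - {w}) = A \<union> B - {w}" by auto
  ultimately show "conn E (A \<union> B - {w})" by simp
qed

lemma succ_conn: "successively (rs E T) l \<Longrightarrow> l \<noteq> [] \<Longrightarrow> conn E (set l)"
proof (induction l)
  case Nil then show ?case by simp
next
  case (Cons x xs)
  show ?case
  proof (cases xs)
    case Nil then show ?thesis by (simp add: conn_single)
  next
    case (Cons y ys)
    then have "conn E (set xs)" using Cons.prems Cons.IH by (simp add: successively_Cons)
    moreover have "conn E {x,y}" using Cons.prems \<open>xs = y#ys\<close> by (intro conn_edge) (auto simp: rs_def)
    ultimately have "conn E ({x,y} \<union> set xs)" using \<open>xs = y#ys\<close> by (intro conn_Un) auto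
    then show ?thesis using \<open>xs = y#ys\<close> by (simp add: insert_absorb)
  qed
qed

end

locale bg = sg E for E :: "'a \<Rightarrow> 'a \<Rightarrow> bool" +
  fixes S :: "'a set"
  assumes finS: "finite S"
begin

lemma block_in: "B \<in> blocks E S \<Longrightarrow> B \<subseteq> S \<and> biconn E B"
  by (simp add: blocks_def)

lemma block_max: "B \<in> blocks E S \<Longrightarrow> B \<subseteq> D \<Longrightarrow> D \<subseteq> S \<Longrightarrow> biconn E D \<Longrightarrow> D = B"
  by (simp add: blocks_def)

lemma sep:
  assumes B: "B \<in> blocks E S" and B': "B' \<in> blocks E S" and ne: "B \<noteq> B'"
    and v: "v \<in> B" "v \<in> B'" and x: "x \<in> B" "x \<noteq> v" and y: "y \<in> B'" "y \<noteq> v"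
    and r: "(rs E (S-{v}))\<^sup>*\<^sup>* x y"
  shows False
proof -
  let ?T = "S - {v}"
  obtain xs0 where "rtrancl_path (rs E ?T) x xs0 y" using r rtranclp_eq_rtrancl_path by metis
  then obtain xs where p: "rtrancl_path (rs E ?T) x xs y" and dist: "distinct (x#xs)"
    using rtrancl_path_distinct by metis
  define L where "L = x # xs"
  have succ: "successively (rs E ?T) L" and lastL: "last L = y" using path_succ[OF p] by (auto simp: L_def)
  have BS: "B \<subseteq> S" "biconn E B" "B' \<subseteq> S" "biconn E B'" using B B' by (auto simp: block_in)
  have LT: "set L \<subseteq> ?T"
  proof
    fix z assume "z \<in> set L"
    then have "z = x \<or> z \<in> set xs" by (auto simp: L_def)
    then show "z \<in> ?T"
      using rtrancl_path_Range[OF p] x BS by (auto simp: rs_def)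
  qed
  have yL: "y \<in> set L" using lastL by (auto simp: L_def)
  have xL: "x \<in> set L" by (simp add: L_def)
  have connL: "conn E (set L)" using succ_conn[OF succ] by (simp add: L_def)
  define H where "H = B \<union> B' \<union> set L"
  have HS: "H \<subseteq> S" using BS LT by (auto simp: H_def)
  have cB: "conn E B" "conn E B'" using BS by (auto simp: biconn_def)
  have "biconn E H" unfolding biconn_def
  proof (intro conjI ballI impI)
    have "conn E (B \<union> B')" by (rule conn_Un) (use cB v in auto)
    then show "conn E H" unfolding H_def using conn_Un[OF _ connL, of "B \<union> B'"] xL x by auto
    fix w assume w: "w \<in> H" "H - {w} \<noteq> {}"
    show "conn E (H - {w})"
    proof (cases "w = v")
      case True
      have c1: "conn E (B - {v})" "conn E (B' - {v})" using BS x y by (auto intro!: biconn_del)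
      have "conn E ((B - {v}) \<union> set L)" by (rule conn_Un) (use c1 connL xL x in auto)
      note h = this
      have "conn E ((B - {v}) \<union> set L \<union> (B' - {v}))" by (rule conn_Un) (use h c1 yL y in auto)
      moreover have "(B - {v}) \<union> set L \<union> (B' - {v}) = H - {w}" using True LT by (auto simp: H_def)
      ultimately show ?thesis by simp
    next
      case False
      have c1: "conn E (B - {w})" "conn E (B' - {w})" using BS v False by (auto intro!: biconn_del)
      have cU: "conn E ((B - {w}) \<union> (B' - {w}))" by (rule conn_Un) (use c1 v False in auto)
      show ?thesis
      proof (cases "w \<in> set L")
        case False
        have "conn E ((B - {w}) \<union> (B' - {w}) \<union> set L)" by (rule conn_Un) (use cU connL xL x False in auto)
        moreover have "(B - {w}) \<union> (B' - {w}) \<union> set L = H - {w}" using False by (auto simp: H_def)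
        ultimately show ?thesis by simp
      next
        case True
        then obtain pre post where sp: "L = pre @ w # post" by (meson split_list)
        have dL: "distinct L" using dist by (simp add: L_def)
        have wn: "w \<notin> set pre" "w \<notin> set post" using dL sp by auto
        have sp1: "successively (rs E ?T) pre" "successively (rs E ?T) post"
          using succ sp by (auto simp: successively_append_iff successively_Cons)
        have cpre: "pre \<noteq> [] \<Longrightarrow> conn E ((B - {w}) \<union> (B' - {w}) \<union> set pre)"
        proof -
          assume "pre \<noteq> []"
          then have "hd pre = x" using sp by (cases pre) (auto simp: L_def)
          then have "x \<in> set pre" "x \<noteq> w" using \<open>pre \<noteq> []\<close> wn by auto
          note h = this
          show ?thesis by (rule conn_Un) (use h cU succ_conn[OF sp1(1) \<open>pre \<noteq> []\<close>] x in auto)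
        qed
        have cpost: "post \<noteq> [] \<Longrightarrow> conn E ((B - {w}) \<union> (B' - {w}) \<union> set post)"
        proof -
          assume "post \<noteq> []"
          then have "last post = y" using sp lastL by simp
          then have "y \<in> set post" "y \<noteq> w" using \<open>post \<noteq> []\<close> wn by auto
          note h = this
          show ?thesis by (rule conn_Un) (use h cU succ_conn[OF sp1(2) \<open>post \<noteq> []\<close>] y in auto)
        qed
        have eq: "H - {w} = (B - {w}) \<union> (B' - {w}) \<union> set pre \<union> set post"
          using wn sp by (auto simp: H_def)
        show ?thesis
        proof (cases "pre = []")
          case True
          show ?thesis
          proof (cases "post = []")
            case True then show ?thesis using eq \<open>pre = []\<close> cU by simp
          next
            case False then show ?thesis using eq \<open>pre = []\<close> cpost by simp
          qed
        next
          case False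
          show ?thesis
          proof (cases "post = []")
            case True then show ?thesis using eq \<open>pre \<noteq> []\<close> cpre by simp
          next
            case False
            have "conn E (((B - {w}) \<union> (B' - {w}) \<union> set pre) \<union> ((B - {w}) \<union> (B' - {w}) \<union> set post))"
              by (rule conn_Un) (use cpre cpost \<open>pre \<noteq> []\<close> False v \<open>w \<noteq> v\<close> in auto)
            moreover have "((B - {w}) \<union> (B' - {w}) \<union> set pre) \<union> ((B - {w}) \<union> (B' - {w}) \<union> set post)
               = H - {w}" using eq by auto
            ultimately show ?thesis by simp
          qed
        qed
      qed
    qed
  qed
  then have "H = B" "H = B'" using block_max[OF B, of H] block_max[OF B', of H] HS by (auto simp: H_def)
  then show False using ne by simp
qed


definition cl :: "'a set \<Rightarrow> 'a \<Rightarrow> 'a set" where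
  "cl T x = {y. (rs E T)\<^sup>*\<^sup>* x y}"

lemma cl_sub: "x \<in> T \<Longrightarrow> cl T x \<subseteq> T"
  by (auto simp: cl_def intro: reach_in)

lemma cl_self: "x \<in> cl T x" by (simp add: cl_def)

lemma cl_eq: "y \<in> cl T x \<Longrightarrow> cl T y = cl T x"
  unfolding cl_def using reach_sym by (auto intro: rtranclp_trans)

lemma reach_cl: "(rs E T)\<^sup>*\<^sup>* x y \<Longrightarrow> (rs E (cl T x))\<^sup>*\<^sup>* x y"
proof (induction rule: rtranclp_induct)
  case base then show ?case by simp
next
  case (step y z)
  have "y \<in> cl T x" "z \<in> cl T x" using step by (auto simp: cl_def)
  then have "rs E (cl T x) y z" using step(2) by (auto simp: rs_def)
  then show ?case using step(3) by (meson rtranclp.rtrancl_into_rtrancl)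
qed

lemma comps_cl: assumes "x \<in> T" shows "cl T x \<in> comps E T"
  unfolding comps_def
proof (intro CollectI conjI allI impI)
  show "cl T x \<subseteq> T" using cl_sub[OF assms] .
  show "conn E (cl T x)" using reach_cl cl_self by (intro conn_hub[of x]) (auto simp: cl_def)
  fix D assume D: "cl T x \<subseteq> D \<and> D \<subseteq> T \<and> conn E D"
  have "D \<subseteq> cl T x"
  proof
    fix d assume "d \<in> D"
    then have "(rs E D)\<^sup>*\<^sup>* x d" using D cl_self[of x T] by (auto simp: conn_alt)
    then show "d \<in> cl T x" using reach_mono[of D T] D by (auto simp: cl_def)
  qed
  then show "D = cl T x" using D by auto
qed

lemma comps_ex: assumes "C \<in> comps E T" shows "\<exists>x\<in>C. C = cl T x \<and> x \<in> T"
proof -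
  have C: "C \<subseteq> T" "conn E C" "\<And>D. C \<subseteq> D \<Longrightarrow> D \<subseteq> T \<Longrightarrow> conn E D \<Longrightarrow> D = C"
    using assms by (auto simp: comps_def)
  obtain x where x: "x \<in> C" using C(2) by (auto simp: conn_alt)
  have "C \<subseteq> cl T x"
  proof
    fix y assume "y \<in> C"
    then have "(rs E C)\<^sup>*\<^sup>* x y" using C x by (auto simp: conn_alt)
    then show "y \<in> cl T x" using reach_mono[OF C(1)] by (auto simp: cl_def)
  qed
  moreover have "cl T x \<in> comps E T" using x C by (intro comps_cl) auto
  ultimately have "cl T x = C" using C(3) by (auto simp: comps_def)
  then show ?thesis using x C by auto
qed

lemma comps_disj: assumes "C1 \<in> comps E T" "C2 \<in> comps E T" "z \<in> C1" "z \<in> C2" shows "C1 = C2"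
proof -
  obtain a where a: "C1 = cl T a" using comps_ex[OF assms(1)] by blast
  obtain b where b: "C2 = cl T b" using comps_ex[OF assms(2)] by blast
  have "cl T z = C1" using cl_eq[of z T a] a assms(3) by simp
  moreover have "cl T z = C2" using cl_eq[of z T b] b assms(4) by simp
  ultimately show ?thesis by simp
qed

lemma comps_conn: "C \<in> comps E T \<Longrightarrow> conn E C \<and> C \<subseteq> T"
  by (simp add: comps_def)

end

context bg begin

lemma blk_ne: assumes "B \<in> blocks E S" "B' \<in> blocks E S" "B \<noteq> B'" "v \<in> B" "v \<in> B'"
  shows "\<exists>x\<in>B. x \<noteq> v"
proof (rule ccontr)
  assume "\<not> ?thesis"
  then have "B \<subseteq> {v}" by blast
  then have "B \<subseteq> B'" using assms(5) by blast
  have "B' = B" by (rule block_max[OF assms(1) \<open>B \<subseteq> B'\<close>]) (use block_in[OF assms(2)] in auto)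
  then show False using assms(3) by simp
qed

lemma block_ex: assumes "T \<subseteq> S" "biconn E T" shows "\<exists>B\<in>blocks E S. T \<subseteq> B"
proof -
  define F where "F = {D. T \<subseteq> D \<and> D \<subseteq> S \<and> biconn E D}"
  have FP: "F \<subseteq> Pow S" unfolding F_def by blast
  have fF: "finite F" using finite_subset[OF FP] finS by simp
  have TF: "T \<in> F" using assms unfolding F_def by blast
  define m where "m = Max (card ` F)"
  have "m \<in> card ` F" unfolding m_def using fF TF by (intro Max_in) blast+
  then obtain D where D: "D \<in> F" "card D = m" by blast
  have mx: "\<And>D'. D' \<in> F \<Longrightarrow> card D' \<le> m" unfolding m_def using fF by simp
  have DS: "T \<subseteq> D" "D \<subseteq> S" "biconn E D" using D(1) unfolding F_def by blast+
  have "D \<in> blocks E S" unfolding blocks_def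
  proof (intro CollectI conjI allI impI)
    show "D \<subseteq> S" "biconn E D" using DS by simp_all
    fix D' assume h: "D \<subseteq> D' \<and> D' \<subseteq> S \<and> biconn E D'"
    then have "D' \<in> F" using DS unfolding F_def by blast
    then have c: "card D' \<le> card D" using mx D(2) by simp
    have "D' \<subseteq> S" "D \<subseteq> D'" using h by simp_all
    then have fD': "finite D'" using finite_subset finS by metis
    have "D = D'" using card_seteq[OF fD' \<open>D \<subseteq> D'\<close> c] .
    then show "D' = D" by simp
  qed
  then show ?thesis using DS by blast
qed

lemma cut:
  assumes B: "B \<in> blocks E S" and B': "B' \<in> blocks E S" and ne: "B \<noteq> B'"
    and v: "v \<in> B" "v \<in> B'"
  shows "cut_vertex E S v"
proof -
  obtain x where x: "x \<in> B" "x \<noteq> v" using blk_ne[OF B B' ne v] by auto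
  obtain y where y: "y \<in> B'" "y \<noteq> v" using blk_ne[OF B' B ne[symmetric] v(2,1)] by auto
  have BS: "B \<subseteq> S" "conn E B" "B' \<subseteq> S" "conn E B'" using block_in[OF B] block_in[OF B'] by (auto simp: biconn_def)
  have vS: "v \<in> S" using v BS by auto
  let ?T = "S - {v}"
  have xT: "x \<in> ?T" "y \<in> ?T" using x y BS by auto
  have "(rs E B)\<^sup>*\<^sup>* v x" using BS(2) v x unfolding conn_alt by blast
  then have xv: "x \<in> cl S v" using reach_mono[OF BS(1)] unfolding cl_def by blast
  have "(rs E B')\<^sup>*\<^sup>* v y" using BS(4) v y unfolding conn_alt by blast
  then have yv: "y \<in> cl S v" using reach_mono[OF BS(3)] unfolding cl_def by blast
  define f where "f C = (if v \<in> C then cl ?T x else C)" for C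
  have fsub: "f C \<subseteq> C \<and> f C \<noteq> {}" if C: "C \<in> comps E S" for C
  proof (cases "v \<in> C")
    case True
    obtain c where c: "C = cl S c" "c \<in> S" using comps_ex[OF C] by auto
    have "C = cl S v" using cl_eq[of v S c] True c by simp
    then have "C = cl S x" using cl_eq[OF xv] by simp
    then have "cl ?T x \<subseteq> C" using reach_mono[of ?T S] by (auto simp: cl_def)
    then show ?thesis using True cl_self[of x ?T] by (auto simp: f_def)
  next
    case False
    have "C \<noteq> {}" using comps_conn[OF C] unfolding conn_alt by blast
    then show ?thesis using False by (simp add: f_def)
  qed
  have fin: "f C \<in> comps E ?T" if C: "C \<in> comps E S" for C
  proof (cases "v \<in> C")
    case True then show ?thesis using comps_cl[OF xT(1)] by (simp add: f_def)
  next
    case False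
    obtain c where c: "c \<in> C" "C = cl S c" "c \<in> S" using comps_ex[OF C] by auto
    have "cl S c \<subseteq> cl ?T c"
    proof
      fix z assume "z \<in> cl S c"
      then have "(rs E S)\<^sup>*\<^sup>* c z" by (simp add: cl_def)
      then have "(rs E ?T)\<^sup>*\<^sup>* c z"
      proof (induction rule: rtranclp_induct)
        case base then show ?case by simp
      next
        case (step y z)
        have "y \<in> C" "z \<in> C" using step c by (auto simp: cl_def)
        then have "rs E ?T y z" using step(2) False by (auto simp: rs_def)
        then show ?case using step(3) by (meson rtranclp.rtrancl_into_rtrancl)
      qed
      then show "z \<in> cl ?T c" by (simp add: cl_def)
    qed
    moreover have "cl ?T c \<subseteq> cl S c" using reach_mono[of ?T S] by (auto simp: cl_def)
    ultimately have "C = cl ?T c" using c(2) by (rule_tac equalityI) auto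
    moreover have "c \<in> ?T" using c False by auto
    ultimately show ?thesis using False comps_cl[of c ?T] by (simp add: f_def)
  qed
  have inj: "inj_on f (comps E S)"
  proof (rule inj_onI)
    fix C1 C2 assume h: "C1 \<in> comps E S" "C2 \<in> comps E S" "f C1 = f C2"
    obtain z where z: "z \<in> f C1" using fsub[OF h(1)] by blast
    have "z \<in> C1" "z \<in> C2" using fsub[OF h(1)] fsub[OF h(2)] h(3) z by auto
    then show "C1 = C2" using comps_disj[OF h(1) h(2)] by blast
  qed
  have notin: "cl ?T y \<notin> f ` comps E S"
  proof
    assume "cl ?T y \<in> f ` comps E S"
    then obtain C where C: "C \<in> comps E S" "cl ?T y = f C" by auto
    then have "y \<in> C" using fsub[OF C(1)] cl_self[of y ?T] by auto
    obtain c where c: "C = cl S c" using comps_ex[OF C(1)] by auto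
    have "C = cl S y" using cl_eq[of y S c] \<open>y \<in> C\<close> c by simp
    also have "... = cl S v" using cl_eq[OF yv] .
    finally have "v \<in> C" using cl_self[of v S] by simp
    then have "y \<in> cl ?T x" using C cl_self[of y ?T] by (simp add: f_def)
    then show False using sep[OF B B' ne v x y] by (simp add: cl_def)
  qed
  have sub1: "f ` comps E S \<subseteq> comps E ?T" using fin by blast
  have sub: "f ` comps E S \<subset> comps E ?T" using sub1 notin comps_cl[OF xT(2)] by blast
  have "finite (comps E ?T)"
  proof (rule finite_subset[of _ "Pow S"])
    show "comps E ?T \<subseteq> Pow S" using comps_conn by blast
  qed (use finS in simp)
  then have "card (f ` comps E S) < card (comps E ?T)" using sub by (simp add: psubset_card_mono)
  moreover have "card (f ` comps E S) = card (comps E S)" by (rule card_image[OF inj])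
  ultimately show ?thesis using vS unfolding cut_vertex_def by linarith
qed

end



definition gd :: "('b \<Rightarrow> 'b \<Rightarrow> bool) \<Rightarrow> 'b \<Rightarrow> 'b \<Rightarrow> nat" where
  "gd r a x = (LEAST n. (r ^^ n) a x)"

lemma rtranclp_sym_gen: "(\<And>a b. r a b \<Longrightarrow> r b a) \<Longrightarrow> r\<^sup>*\<^sup>* x y \<Longrightarrow> r\<^sup>*\<^sup>* y x"
proof -
  assume s: "\<And>a b. r a b \<Longrightarrow> r b a"
  assume "r\<^sup>*\<^sup>* x y"
  then show "r\<^sup>*\<^sup>* y x"
  proof (induction rule: rtranclp_induct)
    case base then show ?case by simp
  next
    case (step y z)
    then show ?case using s[OF step(2)] by (meson converse_rtranclp_into_rtranclp)
  qed
qed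

lemma gd1: "r\<^sup>*\<^sup>* a x \<Longrightarrow> (r ^^ gd r a x) a x"
  unfolding gd_def by (meson LeastI_ex rtranclp_imp_relpowp)

lemma gd2: "(r ^^ n) a x \<Longrightarrow> gd r a x \<le> n"
  unfolding gd_def by (rule Least_le)

lemma gd3: "r\<^sup>*\<^sup>* a x \<Longrightarrow> r x y \<Longrightarrow> gd r a y \<le> Suc (gd r a x)"
  by (meson gd1 gd2 relpowp_Suc_I)

lemma gd4: assumes "r\<^sup>*\<^sup>* a x" "gd r a x = Suc m"
  shows "\<exists>y. r\<^sup>*\<^sup>* a y \<and> r y x \<and> gd r a y = m"
proof -
  have "(r ^^ Suc m) a x" using gd1[OF assms(1)] assms(2) by simp
  then obtain y where y: "(r ^^ m) a y" "r y x" by (rule relpowp_Suc_E)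
  have r: "r\<^sup>*\<^sup>* a y" using y(1) relpowp_imp_rtranclp by metis
  have "gd r a y \<le> m" using gd2[OF y(1)] .
  moreover have "Suc m \<le> Suc (gd r a y)" using gd3[OF r y(2)] assms(2) by simp
  ultimately show ?thesis using r y(2) by auto
qed

lemma gd5: "gd r a a = 0"
proof -
  have "(r ^^ 0) a a" by simp
  then show ?thesis using gd2 by fastforce
qed

lemma gd5': "r\<^sup>*\<^sup>* a x \<Longrightarrow> gd r a x = 0 \<Longrightarrow> x = a"
  using gd1 by fastforce

lemma gd6: assumes "r\<^sup>*\<^sup>* a b" "r\<^sup>*\<^sup>* b x" shows "gd r a x \<le> gd r a b + gd r b x"
proof -
  have "(r ^^ (gd r a b + gd r b x)) a x" using gd1[OF assms(1)] gd1[OF assms(2)]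
    unfolding relpowp_add by blast
  then show ?thesis by (rule gd2)
qed

lemma gd7: assumes "r\<^sup>*\<^sup>* a x" "gd r a x \<le> k"
  shows "(\<lambda>u w. r u w \<and> gd r a u \<le> k \<and> gd r a w \<le> k)\<^sup>*\<^sup>* a x"
  using assms
proof (induction "gd r a x" arbitrary: x)
  case 0 then show ?case using gd5' by fastforce
next
  case (Suc m)
  obtain y where y: "r\<^sup>*\<^sup>* a y" "r y x" "gd r a y = m" using gd4[OF Suc(3) Suc(2)[symmetric]] by blast
  have "(\<lambda>u w. r u w \<and> gd r a u \<le> k \<and> gd r a w \<le> k)\<^sup>*\<^sup>* a y" using Suc y by simp
  moreover have "(\<lambda>u w. r u w \<and> gd r a u \<le> k \<and> gd r a w \<le> k) y x" using y Suc by simp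
  ultimately show ?case by (rule rtranclp.rtrancl_into_rtrancl)
qed

lemma bc_dist_gd: "bc_dist E S = gd (bc_adj E S)"
  by (simp add: fun_eq_iff bc_dist_def gd_def)

lemma adj_sym: "bc_adj E S x y \<Longrightarrow> bc_adj E S y x"
  unfolding bc_adj_def by blast

lemma adj_LR: "bc_adj E S (Inl B) (Inr v) \<longleftrightarrow> B \<in> blocks E S \<and> cut_vertex E S v \<and> v \<in> B"
  unfolding bc_adj_def by blast
lemma adj_RL: "bc_adj E S (Inr v) (Inl B) \<longleftrightarrow> B \<in> blocks E S \<and> cut_vertex E S v \<and> v \<in> B"
  unfolding bc_adj_def by blast
lemma adj_LL: "\<not> bc_adj E S (Inl B) (Inl B')"
  unfolding bc_adj_def by blast
lemma adj_RR: "\<not> bc_adj E S (Inr u) (Inr v)"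
  unfolding bc_adj_def by blast
lemma adj_isl: "bc_adj E S x y \<Longrightarrow> isl x \<noteq> isl y"
  unfolding bc_adj_def by auto
lemma adj_L: "bc_adj E S (Inl B) y \<Longrightarrow> \<exists>v. y = Inr v"
  unfolding bc_adj_def by blast
lemma adj_R: "bc_adj E S (Inr v) y \<Longrightarrow> \<exists>B. y = Inl B"
  unfolding bc_adj_def by blast
lemma adj_L': "bc_adj E S y (Inl B) \<Longrightarrow> \<exists>v. y = Inr v"
  unfolding bc_adj_def by blast
lemma adj_R': "bc_adj E S y (Inr v) \<Longrightarrow> \<exists>B. y = Inl B"
  unfolding bc_adj_def by blast

lemma parity: "(bc_adj E S ^^ n) a b \<Longrightarrow> (isl a = isl b) = even n"
proof (induction n arbitrary: b)
  case 0 then show ?case by simp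
next
  case (Suc n)
  obtain y where "(bc_adj E S ^^ n) a y" "bc_adj E S y b" using Suc(2) by (rule relpowp_Suc_E)
  then show ?case using Suc(1) adj_isl by fastforce
qed

lemma parity_gd: "(bc_adj E S)\<^sup>*\<^sup>* a b \<Longrightarrow> (isl a = isl b) = even (gd (bc_adj E S) a b)"
  using gd1 parity by metis


definition vert :: "('a set + 'a) \<Rightarrow> 'a set" where
  "vert n = (case n of Inl Q \<Rightarrow> Q | Inr w \<Rightarrow> {w})"

locale bt = bg E S for E :: "'a \<Rightarrow> 'a \<Rightarrow> bool" and S :: "'a set" +
  fixes Rts :: "'a set set"
  assumes rok: "roots_ok E S Rts"
begin

abbreviation adj where "adj \<equiv> bc_adj E S"
abbreviation dd where "dd R x \<equiv> gd adj (Inl R) x"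

lemma rok1: "Rts \<subseteq> blocks E S"
  using rok unfolding roots_ok_def by (rule conjunct1)
lemma rok2: "C \<in> blocks E S \<Longrightarrow> \<exists>!R. R \<in> Rts \<and> adj\<^sup>*\<^sup>* (Inl C) (Inl R)"
  using rok unfolding roots_ok_def by (rule conjunct2[THEN bspec])

lemma Rts_blocks: "R \<in> Rts \<Longrightarrow> R \<in> blocks E S"
  using rok1 by (rule subsetD)

lemma root_ex: "C \<in> blocks E S \<Longrightarrow> \<exists>R\<in>Rts. adj\<^sup>*\<^sup>* (Inl C) (Inl R)"
proof -
  assume h: "C \<in> blocks E S"
  have "\<exists>!R. R \<in> Rts \<and> adj\<^sup>*\<^sup>* (Inl C) (Inl R)" using rok2 h by simp
  then show ?thesis by blast
qed

lemma root_uniq: "C \<in> blocks E S \<Longrightarrow> R1 \<in> Rts \<Longrightarrow> R2 \<in> Rts \<Longrightarrow> adj\<^sup>*\<^sup>* (Inl C) (Inl R1)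
   \<Longrightarrow> adj\<^sup>*\<^sup>* (Inl C) (Inl R2) \<Longrightarrow> R1 = R2"
proof -
  assume h: "C \<in> blocks E S" "R1 \<in> Rts" "R2 \<in> Rts" "adj\<^sup>*\<^sup>* (Inl C) (Inl R1)" "adj\<^sup>*\<^sup>* (Inl C) (Inl R2)"
  have "\<exists>!R. R \<in> Rts \<and> adj\<^sup>*\<^sup>* (Inl C) (Inl R)" using rok2 h(1) by simp
  then show "R1 = R2" using h(2-5) by (metis (no_types, lifting))
qed

lemma asym: "adj\<^sup>*\<^sup>* x y \<Longrightarrow> adj\<^sup>*\<^sup>* y x"
  by (rule rtranclp_sym_gen[OF adj_sym])

lemma blk_reach: assumes "Q \<in> blocks E S" "w \<in> Q" "z \<in> Q" "w \<noteq> u" "z \<noteq> u"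
  shows "(rs E (S-{u}))\<^sup>*\<^sup>* w z"
proof -
  have Q: "Q \<subseteq> S" "biconn E Q" using block_in[OF assms(1)] by simp_all
  have wz: "w \<in> Q - {u}" "z \<in> Q - {u}" using assms(2-5) by simp_all
  then have "Q - {u} \<noteq> {}" by blast
  then have "conn E (Q - {u})" using biconn_del[OF Q(2)] by simp
  then have "(rs E (Q-{u}))\<^sup>*\<^sup>* w z" using wz unfolding conn_alt by blast
  moreover have "Q - {u} \<subseteq> S - {u}" using Q by blast
  ultimately show ?thesis using reach_mono[of "Q - {u}" "S - {u}" E w z] by simp
qed

lemma BW: assumes Q1: "Q1 \<in> blocks E S" and a: "a \<in> Q1" "a \<noteq> u"
  and W: "(\<lambda>x y. adj x y \<and> x \<noteq> Inr u \<and> y \<noteq> Inr u)\<^sup>*\<^sup>* (Inl Q1) n"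
  shows "\<forall>z\<in>vert n. z \<noteq> u \<longrightarrow> (rs E (S-{u}))\<^sup>*\<^sup>* a z"
  using W
proof (induction rule: rtranclp_induct)
  case base
  show ?case
  proof (intro ballI impI)
    fix z assume "z \<in> vert (Inl Q1)" "z \<noteq> u"
    then have "z \<in> Q1" unfolding vert_def by simp
    then show "(rs E (S-{u}))\<^sup>*\<^sup>* a z" using blk_reach[OF Q1 a(1) _ a(2) \<open>z \<noteq> u\<close>] by blast
  qed
next
  case (step n n')
  have h: "adj n n'" "n \<noteq> Inr u" "n' \<noteq> Inr u" using step(2) by simp_all
  note IH = step(3)
  show ?case
  proof (cases n)
    case (Inl Q)
    obtain w where w: "n' = Inr w" using adj_L[of E S Q n'] h(1) Inl by blast
    have "adj (Inl Q) (Inr w)" using h(1) Inl w by simp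
    then have wQ: "w \<in> Q" using adj_LR[of E S Q w] by blast
    have wu: "w \<noteq> u" using h(3) w by simp
    have "w \<in> vert n" using Inl wQ unfolding vert_def by simp
    then have aw: "(rs E (S-{u}))\<^sup>*\<^sup>* a w" using IH wu by blast
    show ?thesis
    proof (intro ballI impI)
      fix z assume "z \<in> vert n'" "z \<noteq> u"
      then have "z = w" using w unfolding vert_def by simp
      then show "(rs E (S-{u}))\<^sup>*\<^sup>* a z" using aw by simp
    qed
  next
    case (Inr w)
    obtain Q where Q: "n' = Inl Q" using adj_R[of E S w n'] h(1) Inr by blast
    have "adj (Inr w) (Inl Q)" using h(1) Inr Q by simp
    then have Qb: "Q \<in> blocks E S" "w \<in> Q" using adj_RL[of E S w Q] by blast+
    have wu: "w \<noteq> u" using h(2) Inr by simp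
    have "w \<in> vert n" using Inr unfolding vert_def by simp
    then have aw: "(rs E (S-{u}))\<^sup>*\<^sup>* a w" using IH wu by blast
    show ?thesis
    proof (intro ballI impI)
      fix z assume "z \<in> vert n'" "z \<noteq> u"
      then have "z \<in> Q" using Q unfolding vert_def by simp
      then have "(rs E (S-{u}))\<^sup>*\<^sup>* w z" using blk_reach[OF Qb(1) Qb(2) _ wu \<open>z \<noteq> u\<close>] by blast
      then show "(rs E (S-{u}))\<^sup>*\<^sup>* a z" using aw by (rule rtranclp_trans[rotated])
    qed
  qed
qed


abbreviation Wu where "Wu u \<equiv> (\<lambda>x y. adj x y \<and> x \<noteq> Inr u \<and> y \<noteq> Inr u)"

lemma Wu_sym: "(Wu u)\<^sup>*\<^sup>* x y \<Longrightarrow> (Wu u)\<^sup>*\<^sup>* y x"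
proof -
  assume h: "(Wu u)\<^sup>*\<^sup>* x y"
  have "\<And>a b. Wu u a b \<Longrightarrow> Wu u b a" using adj_sym[of E S] by blast
  then show ?thesis using rtranclp_sym_gen[of "Wu u" x y] h by blast
qed

lemma reach_step: "adj\<^sup>*\<^sup>* a x \<Longrightarrow> adj x y \<Longrightarrow> adj\<^sup>*\<^sup>* a y"
  by (rule rtranclp.rtrancl_into_rtrancl)

lemma reach_step': "adj\<^sup>*\<^sup>* a x \<Longrightarrow> adj y x \<Longrightarrow> adj\<^sup>*\<^sup>* a y"
proof -
  assume "adj\<^sup>*\<^sup>* a x" "adj y x"
  then show ?thesis using reach_step[of a x y] adj_sym[of E S y x] by blast
qed

lemma bnd_W: assumes "adj\<^sup>*\<^sup>* (Inl R) x" "dd R x \<le> k" "k < dd R (Inr u)"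
  shows "(Wu u)\<^sup>*\<^sup>* (Inl R) x"
proof -
  have "(\<lambda>a b. adj a b \<and> dd R a \<le> k \<and> dd R b \<le> k)\<^sup>*\<^sup>* (Inl R) x"
    using gd7[OF assms(1) assms(2)] .
  moreover have "\<And>a b. (adj a b \<and> dd R a \<le> k \<and> dd R b \<le> k) \<longrightarrow> Wu u a b"
  proof
    fix a b assume h: "adj a b \<and> dd R a \<le> k \<and> dd R b \<le> k"
    have "a \<noteq> Inr u"
    proof
      assume "a = Inr u" then have "dd R a = dd R (Inr u)" by simp
      then show False using h assms(3) by linarith
    qed
    moreover have "b \<noteq> Inr u"
    proof
      assume "b = Inr u" then have "dd R b = dd R (Inr u)" by simp
      then show False using h assms(3) by linarith
    qed
    ultimately show "Wu u a b" using h by simp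
  qed
  ultimately show ?thesis using mono_rtranclp[of "\<lambda>a b. adj a b \<and> dd R a \<le> k \<and> dd R b \<le> k" "Wu u"] by blast
qed

lemma uniq:
  assumes rx: "adj\<^sup>*\<^sup>* (Inl R) x" and y1: "adj y1 x" and y2: "adj y2 x"
    and d1: "Suc (dd R y1) = dd R x" and d2: "Suc (dd R y2) = dd R x"
  shows "y1 = y2"
proof (rule ccontr)
  assume ne: "y1 \<noteq> y2"
  have r1: "adj\<^sup>*\<^sup>* (Inl R) y1" using reach_step'[OF rx y1] .
  have r2: "adj\<^sup>*\<^sup>* (Inl R) y2" using reach_step'[OF rx y2] .
  show False
  proof (cases x)
    case (Inl B)
    obtain u1 where u1: "y1 = Inr u1" using adj_L'[of E S y1 B] y1 Inl by blast
    obtain u2 where u2: "y2 = Inr u2" using adj_L'[of E S y2 B] y2 Inl by blast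
    have u12: "u1 \<noteq> u2" using ne u1 u2 by simp
    have "adj (Inr u1) (Inl B)" "adj (Inr u2) (Inl B)" using y1 y2 u1 u2 Inl by simp_all
    then have Bb: "B \<in> blocks E S" "u1 \<in> B" "u2 \<in> B" using adj_RL[of E S u1 B] adj_RL[of E S u2 B] by blast+
    have "even (dd R x)" using parity_gd[OF rx] Inl by simp
    then obtain m0 where m0: "dd R y1 = Suc m0"
      using d1 by (metis even_Suc odd_pos Suc_pred)
    have m0': "dd R y2 = Suc m0" using m0 d1 d2 by simp
    obtain p1 where p1: "adj\<^sup>*\<^sup>* (Inl R) p1" "adj p1 y1" "dd R p1 = m0" using gd4[OF r1 m0] by blast
    obtain p2 where p2: "adj\<^sup>*\<^sup>* (Inl R) p2" "adj p2 y2" "dd R p2 = m0" using gd4[OF r2 m0'] by blast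
    obtain Q1 where Q1: "p1 = Inl Q1" using adj_R'[of E S p1 u1] p1(2) u1 by blast
    obtain Q2 where Q2: "p2 = Inl Q2" using adj_R'[of E S p2 u2] p2(2) u2 by blast
    have "adj (Inl Q1) (Inr u1)" using p1 Q1 u1 by simp
    then have Q1b: "Q1 \<in> blocks E S" "u1 \<in> Q1" using adj_LR[of E S Q1 u1] by blast+
    have a2: "adj (Inl Q2) (Inr u2)" using p2 Q2 u2 by simp
    have "Q1 \<noteq> B" using p1(3) Q1 m0 d1 Inl by auto
    then obtain a where a: "a \<in> Q1" "a \<noteq> u1" using blk_ne[OF Q1b(1) Bb(1) _ Q1b(2) Bb(2)] by blast
    have k: "m0 < dd R (Inr u1)" using m0 u1 by simp
    have w1: "(Wu u1)\<^sup>*\<^sup>* (Inl R) (Inl Q1)" using bnd_W[OF p1(1) _ k] p1(3) Q1 by simp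
    have w2: "(Wu u1)\<^sup>*\<^sup>* (Inl R) (Inl Q2)" using bnd_W[OF p2(1) _ k] p2(3) Q2 by simp
    have s1: "(Wu u1)\<^sup>*\<^sup>* (Inl Q1) (Inl Q2)" using Wu_sym[OF w1] w2 by (rule rtranclp_trans)
    have s2: "Wu u1 (Inl Q2) (Inr u2)" using a2 u12 by simp
    have s3: "Wu u1 (Inr u2) (Inl B)" using y2 u2 Inl u12 by simp
    have "(Wu u1)\<^sup>*\<^sup>* (Inl Q1) (Inr u2)" using s1 s2 by (rule rtranclp.rtrancl_into_rtrancl)
    then have "(Wu u1)\<^sup>*\<^sup>* (Inl Q1) (Inl B)" using s3 by (rule rtranclp.rtrancl_into_rtrancl)
    then have "\<forall>z\<in>vert (Inl B). z \<noteq> u1 \<longrightarrow> (rs E (S-{u1}))\<^sup>*\<^sup>* a z" by (rule BW[OF Q1b(1) a])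
    then have "(rs E (S-{u1}))\<^sup>*\<^sup>* a u2" using Bb(3) u12 unfolding vert_def by simp
    then show False using sep[OF Q1b(1) Bb(1) \<open>Q1 \<noteq> B\<close> Q1b(2) Bb(2) a Bb(3) u12[symmetric]] by blast
  next
    case (Inr w)
    obtain Q1 where q1: "y1 = Inl Q1" using adj_R'[of E S y1 w] y1 Inr by blast
    obtain Q2 where q2: "y2 = Inl Q2" using adj_R'[of E S y2 w] y2 Inr by blast
    have "adj (Inl Q1) (Inr w)" "adj (Inl Q2) (Inr w)" using y1 y2 q1 q2 Inr by simp_all
    then have Qb: "Q1 \<in> blocks E S" "w \<in> Q1" "Q2 \<in> blocks E S" "w \<in> Q2"
      using adj_LR[of E S Q1 w] adj_LR[of E S Q2 w] by blast+
    have Qne: "Q1 \<noteq> Q2" using ne q1 q2 by simp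
    obtain a where a: "a \<in> Q1" "a \<noteq> w" using blk_ne[OF Qb(1) Qb(3) Qne Qb(2) Qb(4)] by blast
    obtain b where b: "b \<in> Q2" "b \<noteq> w" using blk_ne[OF Qb(3) Qb(1) Qne[symmetric] Qb(4) Qb(2)] by blast
    have k: "dd R y1 < dd R (Inr w)" using d1 Inr by simp
    have w1: "(Wu w)\<^sup>*\<^sup>* (Inl R) (Inl Q1)" using bnd_W[OF r1 _ k] q1 by simp
    have w2: "(Wu w)\<^sup>*\<^sup>* (Inl R) (Inl Q2)" using bnd_W[OF r2 _ k] q2 d1 d2 by simp
    have "(Wu w)\<^sup>*\<^sup>* (Inl Q1) (Inl Q2)" using Wu_sym[OF w1] w2 by (rule rtranclp_trans)
    then have "\<forall>z\<in>vert (Inl Q2). z \<noteq> w \<longrightarrow> (rs E (S-{w}))\<^sup>*\<^sup>* a z" by (rule BW[OF Qb(1) a])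
    then have "(rs E (S-{w}))\<^sup>*\<^sup>* a b" using b unfolding vert_def by simp
    then show False using sep[OF Qb(1) Qb(3) Qne Qb(2) Qb(4) a b] by blast
  qed
qed


lemma tparent_iff: "tparent E S Rts C P \<longleftrightarrow> C \<in> blocks E S \<and> P \<in> blocks E S \<and> C \<notin> Rts \<and>
     (\<exists>R\<in>Rts. adj\<^sup>*\<^sup>* (Inl C) (Inl R) \<and>
       (\<exists>v. adj (Inl C) (Inr v) \<and> adj (Inr v) (Inl P) \<and>
            Suc (dd R (Inr v)) = dd R (Inl C) \<and> Suc (dd R (Inl P)) = dd R (Inr v)))"
  unfolding tparent_def bc_dist_gd by simp

lemma root_self: "R \<in> Rts \<Longrightarrow> C \<in> blocks E S \<Longrightarrow> C \<in> Rts \<Longrightarrow> adj\<^sup>*\<^sup>* (Inl C) (Inl R) \<Longrightarrow> C = R"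
  using root_uniq[of C C R] by simp

lemma depth_claim:
  "\<And>C. C \<in> blocks E S \<Longrightarrow> R \<in> Rts \<Longrightarrow> adj\<^sup>*\<^sup>* (Inl C) (Inl R) \<Longrightarrow>
     (\<exists>R'\<in>Rts. (tparent E S Rts ^^ n) C R') \<longleftrightarrow> dd R (Inl C) = 2 * n"
proof (induction n)
  case 0
  show ?case
  proof
    assume "\<exists>R'\<in>Rts. (tparent E S Rts ^^ 0) C R'"
    then have "C \<in> Rts" by simp
    then have "C = R" using root_self 0 by blast
    then show "dd R (Inl C) = 2 * 0" using gd5 by simp
  next
    assume "dd R (Inl C) = 2 * 0"
    moreover have "adj\<^sup>*\<^sup>* (Inl R) (Inl C)" using asym[OF 0(3)] .
    ultimately have "Inl C = Inl R" using gd5'[of adj "Inl R" "Inl C"] by simp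
    then show "\<exists>R'\<in>Rts. (tparent E S Rts ^^ 0) C R'" using 0(2) by simp
  qed
next
  case (Suc n)
  show ?case
  proof
    assume "\<exists>R'\<in>Rts. (tparent E S Rts ^^ Suc n) C R'"
    then obtain R' P where R': "R' \<in> Rts" "tparent E S Rts C P" "(tparent E S Rts ^^ n) P R'"
      using relpowp_Suc_D2 by metis
    obtain R0 v where tp: "R0 \<in> Rts" "adj\<^sup>*\<^sup>* (Inl C) (Inl R0)" "adj (Inl C) (Inr v)" "adj (Inr v) (Inl P)"
        "Suc (dd R0 (Inr v)) = dd R0 (Inl C)" "Suc (dd R0 (Inl P)) = dd R0 (Inr v)" "P \<in> blocks E S"
      using R'(2) unfolding tparent_iff by blast
    have "R0 = R" using root_uniq[OF Suc(2) tp(1) Suc(3) tp(2) Suc(4)] .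
    have "adj (Inl P) (Inr v)" "adj (Inr v) (Inl C)" using tp(3,4) adj_sym by blast+
    then have "adj\<^sup>*\<^sup>* (Inl P) (Inl C)" by (meson rtranclp.rtrancl_into_rtrancl rtranclp.rtrancl_refl)
    then have "adj\<^sup>*\<^sup>* (Inl P) (Inl R)" using Suc(4) by (rule rtranclp_trans)
    then have "dd R (Inl P) = 2 * n" using Suc(1)[OF tp(7) Suc(3)] R'(1,3) by blast
    then show "dd R (Inl C) = 2 * Suc n" using tp(5,6) \<open>R0 = R\<close> by simp
  next
    assume d: "dd R (Inl C) = 2 * Suc n"
    have rc: "adj\<^sup>*\<^sup>* (Inl R) (Inl C)" using asym[OF Suc(4)] .
    have "dd R (Inl C) = Suc (Suc (2 * n))" using d by simp
    then obtain y where y: "adj\<^sup>*\<^sup>* (Inl R) y" "adj y (Inl C)" "dd R y = Suc (2 * n)"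
      using gd4[OF rc] by blast
    obtain v where v: "y = Inr v" using adj_L'[of E S y C] y(2) by blast
    obtain p where p: "adj\<^sup>*\<^sup>* (Inl R) p" "adj p y" "dd R p = 2 * n"
      using gd4[OF y(1) y(3)] by blast
    obtain P where P: "p = Inl P" using adj_R'[of E S p v] p(2) v by blast
    have aPv: "adj (Inl P) (Inr v)" using p(2) P v by simp
    have Pb: "P \<in> blocks E S" using aPv adj_LR[of E S P v] by blast
    have Cn: "C \<notin> Rts"
    proof
      assume "C \<in> Rts"
      then have "C = R" using root_self Suc(2,3,4) by blast
      then show False using d gd5[of adj "Inl R"] by simp
    qed
    have "tparent E S Rts C P" unfolding tparent_iff
    proof (intro conjI bexI exI)
      show "C \<in> blocks E S" "P \<in> blocks E S" "C \<notin> Rts" "R \<in> Rts" "adj\<^sup>*\<^sup>* (Inl C) (Inl R)"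
        using Suc(2,3,4) Pb Cn by simp_all
      show "adj (Inl C) (Inr v)" using y(2) v adj_sym by blast
      show "adj (Inr v) (Inl P)" using aPv adj_sym by blast
      show "Suc (dd R (Inr v)) = dd R (Inl C)" using y(3) v d by simp
      show "Suc (dd R (Inl P)) = dd R (Inr v)" using y(3) v p(3) P by simp
    qed
    moreover have "\<exists>R'\<in>Rts. (tparent E S Rts ^^ n) P R'"
      using Suc(1)[OF Pb Suc(3) asym[OF p(1)[unfolded P]]] p(3) P by simp
    ultimately show "\<exists>R'\<in>Rts. (tparent E S Rts ^^ Suc n) C R'"
      by (meson relpowp_Suc_I2)
  qed
qed

lemma even_dd: "adj\<^sup>*\<^sup>* (Inl R) (Inl C) \<Longrightarrow> even (dd R (Inl C))"
  using parity_gd[of E S "Inl R" "Inl C"] by simp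

lemma tdepth_eq: assumes "C \<in> blocks E S" "R \<in> Rts" "adj\<^sup>*\<^sup>* (Inl C) (Inl R)"
  shows "tdepth E S Rts C = dd R (Inl C) div 2"
proof -
  have ev: "even (dd R (Inl C))" using even_dd asym[OF assms(3)] by blast
  have "\<And>n. (\<exists>R'\<in>Rts. (tparent E S Rts ^^ n) C R') \<longleftrightarrow> n = dd R (Inl C) div 2"
    using depth_claim[OF assms] ev by auto
  then have "(LEAST n. \<exists>R'\<in>Rts. (tparent E S Rts ^^ n) C R') = (LEAST n. n = dd R (Inl C) div 2)"
    by simp
  also have "... = dd R (Inl C) div 2" by (rule Least_equality) simp_all
  finally show ?thesis unfolding tdepth_def .
qed


lemma share: assumes "B1 \<in> blocks E S" "B2 \<in> blocks E S" "u \<in> B1" "u \<in> B2"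
  shows "adj\<^sup>*\<^sup>* (Inl B1) (Inl B2)"
proof (cases "B1 = B2")
  case True then show ?thesis by simp
next
  case False
  have c: "cut_vertex E S u" using cut[OF assms(1,2) False assms(3,4)] .
  have "adj (Inl B1) (Inr u)" using c assms adj_LR[of E S B1 u] by blast
  moreover have "adj (Inr u) (Inl B2)" using c assms adj_RL[of E S u B2] by blast
  ultimately show ?thesis by (meson rtranclp.rtrancl_into_rtrancl rtranclp.rtrancl_refl)
qed

lemma edge_blk: assumes "E a b" "a \<in> S" "b \<in> S" shows "\<exists>B\<in>blocks E S. a \<in> B \<and> b \<in> B"
proof -
  have "biconn E {a,b}" using biconn_edge[OF assms(1)] .
  moreover have "{a,b} \<subseteq> S" using assms(2,3) by simp
  ultimately obtain B where "B \<in> blocks E S" "{a,b} \<subseteq> B" using block_ex by blast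
  then show ?thesis by blast
qed

lemma path_blocks: assumes "(rs E T)\<^sup>*\<^sup>* a y" "T \<subseteq> S" "B \<in> blocks E S" "a \<in> B"
  shows "\<And>B'. B' \<in> blocks E S \<Longrightarrow> y \<in> B' \<Longrightarrow> adj\<^sup>*\<^sup>* (Inl B) (Inl B')"
  using assms(1)
proof (induction rule: rtranclp_induct)
  case base then show ?case using share[OF assms(3) _ assms(4)] by blast
next
  case (step y z)
  have h: "E y z" "y \<in> S" "z \<in> S" using step(2) assms(2) unfolding rs_def by auto
  obtain Byz where Byz: "Byz \<in> blocks E S" "y \<in> Byz" "z \<in> Byz" using edge_blk[OF h] by blast
  have "adj\<^sup>*\<^sup>* (Inl B) (Inl Byz)" using step(3)[OF Byz(1,2)] .
  moreover have "adj\<^sup>*\<^sup>* (Inl Byz) (Inl B')" using share[OF Byz(1) step(4) Byz(3) step(5)] .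
  ultimately show ?case by (rule rtranclp_trans)
qed

lemma nbr: assumes "adj\<^sup>*\<^sup>* (Inl R) x" "adj x y"
  shows "dd R y = Suc (dd R x) \<or> Suc (dd R y) = dd R x"
proof -
  have ry: "adj\<^sup>*\<^sup>* (Inl R) y" using reach_step[OF assms] .
  have 1: "dd R y \<le> Suc (dd R x)" using gd3[OF assms] .
  have 2: "dd R x \<le> Suc (dd R y)" using gd3[OF ry adj_sym[OF assms(2)]] .
  have "(True = isl x) = even (dd R x)" using parity_gd[OF assms(1)] by simp
  moreover have "(True = isl y) = even (dd R y)" using parity_gd[OF ry] by simp
  moreover have "isl x \<noteq> isl y" using adj_isl[OF assms(2)] .
  ultimately have "dd R x \<noteq> dd R y" by auto
  then show ?thesis using 1 2 by linarith
qed


abbreviation Desc where "Desc R t x \<equiv> dd R x = dd R (Inl t) + gd adj (Inl t) x"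

lemma D2: assumes rt: "adj\<^sup>*\<^sup>* (Inl R) (Inl t)" and rx: "adj\<^sup>*\<^sup>* (Inl R) x" and D: "Desc R t x"
  and xy: "adj x y" and dy: "dd R y = Suc (dd R x)"
  shows "Desc R t y"
proof -
  have tx: "adj\<^sup>*\<^sup>* (Inl t) x" using asym[OF rt] rx by (rule rtranclp_trans)
  have ty: "adj\<^sup>*\<^sup>* (Inl t) y" using reach_step[OF tx xy] .
  have 1: "gd adj (Inl t) y \<le> Suc (gd adj (Inl t) x)" using gd3[OF tx xy] .
  have 2: "dd R y \<le> dd R (Inl t) + gd adj (Inl t) y" using gd6[OF rt ty] .
  show ?thesis using 1 2 D dy by linarith
qed

lemma D3: assumes rt: "adj\<^sup>*\<^sup>* (Inl R) (Inl t)" and rx: "adj\<^sup>*\<^sup>* (Inl R) x" and D: "Desc R t x"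
  and xt: "x \<noteq> Inl t" and yx: "adj y x" and dy: "Suc (dd R y) = dd R x"
  shows "Desc R t y"
proof -
  have tx: "adj\<^sup>*\<^sup>* (Inl t) x" using asym[OF rt] rx by (rule rtranclp_trans)
  have "gd adj (Inl t) x \<noteq> 0" using gd5'[OF tx] xt by blast
  then obtain j where j: "gd adj (Inl t) x = Suc j" using not0_implies_Suc by blast
  obtain w where w: "adj\<^sup>*\<^sup>* (Inl t) w" "adj w x" "gd adj (Inl t) w = j" using gd4[OF tx j] by blast
  have rw: "adj\<^sup>*\<^sup>* (Inl R) w" using rt w(1) by (rule rtranclp_trans)
  have 1: "dd R w \<le> dd R (Inl t) + j" using gd6[OF rt w(1)] w(3) by simp
  have 2: "dd R x \<le> Suc (dd R w)" using gd3[OF rw w(2)] .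
  have 3: "Suc (dd R w) = dd R x" using 1 2 D j by linarith
  have "w = y" using uniq[OF rx w(2) yx 3 dy] .
  then show ?thesis using 1 2 D j dy w(3) by simp
qed

lemma Wprop:
  assumes rt: "adj\<^sup>*\<^sup>* (Inl R) (Inl t)" and tv: "adj (Inl t) (Inr v)" and dv: "Suc (dd R (Inr v)) = dd R (Inl t)"
    and B1: "B1 \<in> blocks E S" "adj\<^sup>*\<^sup>* (Inl R) (Inl B1)" "Desc R t (Inl B1)"
    and z: "z \<in> B1" "z \<noteq> v" and B2: "B2 \<in> blocks E S" "z \<in> B2"
  shows "adj\<^sup>*\<^sup>* (Inl R) (Inl B2) \<and> Desc R t (Inl B2)"
proof (cases "B1 = B2")
  case True then show ?thesis using B1 by simp
next
  case False
  have c: "cut_vertex E S z" using cut[OF B1(1) B2(1) False z(1) B2(2)] .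
  have a1: "adj (Inl B1) (Inr z)" using c B1(1) z(1) adj_LR[of E S B1 z] by blast
  have a2: "adj (Inr z) (Inl B2)" using c B2 adj_RL[of E S z B2] by blast
  have rz: "adj\<^sup>*\<^sup>* (Inl R) (Inr z)" using reach_step[OF B1(2) a1] .
  have r2: "adj\<^sup>*\<^sup>* (Inl R) (Inl B2)" using reach_step[OF rz a2] .
  have Dz: "Desc R t (Inr z)"
  proof (cases "dd R (Inr z) = Suc (dd R (Inl B1))")
    case True then show ?thesis using D2[OF rt B1(2) B1(3) a1] by simp
  next
    case False
    then have dz: "Suc (dd R (Inr z)) = dd R (Inl B1)" using nbr[OF B1(2) a1] by simp
    show ?thesis
    proof (cases "B1 = t")
      case True
      have "adj (Inr z) (Inl t)" "adj (Inr v) (Inl t)" using a1 tv True adj_sym by blast+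
      then have "Inr z = Inr v" using uniq[OF rt _ _ _ dv, of "Inr z"] dz True by blast
      then show ?thesis using z(2) by simp
    next
      case False
      then show ?thesis using D3[OF rt B1(2) B1(3) _ adj_sym[OF a1] dz] by simp
    qed
  qed
  have D2': "Desc R t (Inl B2)"
  proof (cases "dd R (Inl B2) = Suc (dd R (Inr z))")
    case True then show ?thesis using D2[OF rt rz Dz a2] by simp
  next
    case False
    then have "Suc (dd R (Inl B2)) = dd R (Inr z)" using nbr[OF rz a2] by simp
    then show ?thesis using D3[OF rt rz Dz _ adj_sym[OF a2]] by simp
  qed
  show ?thesis using r2 D2' by simp
qed

lemma Uinv:
  assumes rt: "adj\<^sup>*\<^sup>* (Inl R) (Inl t)" and tb: "t \<in> blocks E S"
    and tv: "adj (Inl t) (Inr v)" and dv: "Suc (dd R (Inr v)) = dd R (Inl t)"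
    and x0: "x0 \<in> t" "x0 \<noteq> v" and p: "(rs E (S-{v}))\<^sup>*\<^sup>* x0 y"
  shows "\<And>B. B \<in> blocks E S \<Longrightarrow> y \<in> B \<Longrightarrow> adj\<^sup>*\<^sup>* (Inl R) (Inl B) \<and> Desc R t (Inl B)"
  using p
proof (induction rule: rtranclp_induct)
  case base
  have "Desc R t (Inl t)" using gd5[of adj "Inl t"] by simp
  then show ?case using Wprop[OF rt tv dv tb rt _ x0 base] by simp
next
  case (step y z)
  have h: "E y z" "y \<in> S" "z \<in> S" "z \<noteq> v" using step(2) unfolding rs_def by auto
  obtain Byz where Byz: "Byz \<in> blocks E S" "y \<in> Byz" "z \<in> Byz" using edge_blk[OF h(1-3)] by blast
  have "adj\<^sup>*\<^sup>* (Inl R) (Inl Byz) \<and> Desc R t (Inl Byz)" using step(3)[OF Byz(1,2)] .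
  then show ?case using Wprop[OF rt tv dv Byz(1) _ _ Byz(3) h(4) step(4,5)] by blast
qed


lemma seg_root_eq: assumes "t \<in> blocks E S" "I \<inter> t \<noteq> {}"
  "\<And>t'. t' \<in> blocks E S \<Longrightarrow> I \<inter> t' \<noteq> {} \<Longrightarrow> t' \<noteq> t \<Longrightarrow> tdepth E S Rts t < tdepth E S Rts t'"
  shows "seg_root E S Rts I = t"
  unfolding seg_root_def
proof (rule the_equality)
  show "t \<in> blocks E S \<and> I \<inter> t \<noteq> {} \<and>
     (\<forall>t'\<in>blocks E S. I \<inter> t' \<noteq> {} \<and> t' \<noteq> t \<longrightarrow> tdepth E S Rts t < tdepth E S Rts t')"
    using assms by blast
  fix t2 assume h: "t2 \<in> blocks E S \<and> I \<inter> t2 \<noteq> {} \<and>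
     (\<forall>t'\<in>blocks E S. I \<inter> t' \<noteq> {} \<and> t' \<noteq> t2 \<longrightarrow> tdepth E S Rts t2 < tdepth E S Rts t')"
  show "t2 = t"
  proof (rule ccontr)
    assume ne: "t2 \<noteq> t"
    have "tdepth E S Rts t < tdepth E S Rts t2" using assms(3)[of t2] h ne by blast
    moreover have "tdepth E S Rts t2 < tdepth E S Rts t" using h assms(1,2) ne by blast
    ultimately show False by simp
  qed
qed

lemma div_lt: "even (a::nat) \<Longrightarrow> even e \<Longrightarrow> e \<noteq> 0 \<Longrightarrow> a div 2 < (a + e) div 2"
  by (auto elim!: evenE)

lemma KEY2:
  assumes cI: "conn E I" and IS: "I \<subseteq> S" and tb: "t \<in> blocks E S" and It: "I \<inter> t \<noteq> {}"
    and R: "R \<in> Rts" and tR: "adj\<^sup>*\<^sup>* (Inl t) (Inl R)"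
    and tv: "adj (Inl t) (Inr v)" and dv: "Suc (dd R (Inr v)) = dd R (Inl t)" and vI: "v \<notin> I"
  shows "seg_root E S Rts I = t"
proof (rule seg_root_eq[OF tb It])
  have rt: "adj\<^sup>*\<^sup>* (Inl R) (Inl t)" using asym[OF tR] .
  obtain x0 where x0: "x0 \<in> I" "x0 \<in> t" using It by blast
  have x0v: "x0 \<noteq> v" using x0(1) vI by blast
  fix t' assume t': "t' \<in> blocks E S" "I \<inter> t' \<noteq> {}" "t' \<noteq> t"
  obtain y where y: "y \<in> I" "y \<in> t'" using t'(2) by blast
  have "(rs E I)\<^sup>*\<^sup>* x0 y" using cI x0(1) y(1) unfolding conn_alt by blast
  moreover have "I \<subseteq> S - {v}" using IS vI by blast
  ultimately have p: "(rs E (S - {v}))\<^sup>*\<^sup>* x0 y" using reach_mono by metis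
  have U: "adj\<^sup>*\<^sup>* (Inl R) (Inl t') \<and> Desc R t (Inl t')"
    using Uinv[OF rt tb tv dv x0(2) x0v p t'(1) y(2)] .
  have td1: "tdepth E S Rts t = dd R (Inl t) div 2" using tdepth_eq[OF tb R tR] .
  have td2: "tdepth E S Rts t' = dd R (Inl t') div 2" using tdepth_eq[OF t'(1) R asym] U by blast
  have tt': "adj\<^sup>*\<^sup>* (Inl t) (Inl t')" using tR U by (meson rtranclp_trans)
  have e0: "gd adj (Inl t) (Inl t') \<noteq> 0" using gd5'[OF tt'] t'(3) by blast
  have e1: "even (gd adj (Inl t) (Inl t'))" using parity_gd[OF tt'] by simp
  have e2: "even (dd R (Inl t))" using even_dd[OF rt] .
  show "tdepth E S Rts t < tdepth E S Rts t'" using td1 td2 U div_lt[OF e2 e1 e0] by simp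
qed

lemma KEY1:
  assumes cI: "conn E I" and IS: "I \<subseteq> S" and tb: "t \<in> blocks E S" and It: "I \<inter> t \<noteq> {}"
    and tR: "t \<in> Rts"
  shows "seg_root E S Rts I = t"
proof (rule seg_root_eq[OF tb It])
  obtain x0 where x0: "x0 \<in> I" "x0 \<in> t" using It by blast
  fix t' assume t': "t' \<in> blocks E S" "I \<inter> t' \<noteq> {}" "t' \<noteq> t"
  obtain y where y: "y \<in> I" "y \<in> t'" using t'(2) by blast
  have "(rs E I)\<^sup>*\<^sup>* x0 y" using cI x0(1) y(1) unfolding conn_alt by blast
  then have tt': "adj\<^sup>*\<^sup>* (Inl t) (Inl t')" using path_blocks[OF _ IS tb x0(2) t'(1) y(2)] by blast
  have td1: "tdepth E S Rts t = dd t (Inl t) div 2" using tdepth_eq[OF tb tR] by simp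
  have td2: "tdepth E S Rts t' = dd t (Inl t') div 2" using tdepth_eq[OF t'(1) tR asym[OF tt']] .
  have e0: "dd t (Inl t') \<noteq> 0" using gd5'[OF tt'] t'(3) by blast
  have e1: "even (dd t (Inl t'))" using parity_gd[OF tt'] by simp
  show "tdepth E S Rts t < tdepth E S Rts t'" using td1 td2 gd5[of adj "Inl t"] div_lt[OF _ e1 e0, of 0] by simp
qed

end

theorem lemma4p10:
  fixes V :: "'a set" and E :: "'a \<Rightarrow> 'a \<Rightarrow> bool" and Vs :: "nat \<Rightarrow> 'a set"
    and l :: nat and Z :: "'a set" and Rts :: "'a set set" and I1 I2 :: "'a set"
  assumes "finite V"
    and "\<And>x y. E x y \<Longrightarrow> E y x"
    and "\<And>x y. E x y \<Longrightarrow> x \<in> V \<and> y \<in> V"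
    and "\<And>x. \<not> E x x"
    and "(\<Union>i\<in>{1..l}. Vs i) = V"
    and "\<And>i j. i \<in> {1..l} \<Longrightarrow> j \<in> {1..l} \<Longrightarrow> i \<noteq> j \<Longrightarrow> Vs i \<inter> Vs j = {}"
    and "Z \<subseteq> V"
    and "roots_ok E (V - Z) Rts"
    and "is_segment E Vs l Z I1"
    and "is_segment E Vs l Z I2"
    and "I1 \<noteq> I2"
  shows "seg_body E (V - Z) Rts I1 \<inter> seg_body E (V - Z) Rts I2 = {}"
proof -
  interpret T: bt E "V - Z" Rts
  proof (unfold_locales)
    show "\<And>x y. E x y \<Longrightarrow> E y x" by (rule assms(2))
    show "finite (V - Z)" using assms(1) by simp
    show "roots_ok E (V - Z) Rts" by (rule assms(8))
  qed
  obtain i where i: "i \<in> {1..l}" "I1 \<in> comps E (Vs i - Z)" using assms(9) unfolding is_segment_def by blast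
  obtain j where j: "j \<in> {1..l}" "I2 \<in> comps E (Vs j - Z)" using assms(10) unfolding is_segment_def by blast
  have Vi: "Vs i \<subseteq> V" "Vs j \<subseteq> V" using assms(5) i(1) j(1) by blast+
  have c1: "conn E I1" "I1 \<subseteq> Vs i - Z" using T.comps_conn[OF i(2)] by simp_all
  have c2: "conn E I2" "I2 \<subseteq> Vs j - Z" using T.comps_conn[OF j(2)] by simp_all
  have S1: "I1 \<subseteq> V - Z" using c1(2) Vi(1) by blast
  have S2: "I2 \<subseteq> V - Z" using c2(2) Vi(2) by blast
  have disj: "I1 \<inter> I2 = {}"
  proof (rule ccontr)
    assume "I1 \<inter> I2 \<noteq> {}"
    then obtain z where z: "z \<in> I1" "z \<in> I2" by blast
    show False
    proof (cases "i = j")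
      case True
      then have "I2 \<in> comps E (Vs i - Z)" using j(2) by simp
      then have "I1 = I2" using T.comps_disj[OF i(2) _ z(1) z(2)] by simp
      then show False using assms(11) by simp
    next
      case False
      then have "Vs i \<inter> Vs j = {}" using assms(6) i(1) j(1) by blast
      then show False using z c1(2) c2(2) by blast
    qed
  qed
  show ?thesis
  proof (rule ccontr)
    assume "seg_body E (V - Z) Rts I1 \<inter> seg_body E (V - Z) Rts I2 \<noteq> {}"
    then obtain t where t: "t \<in> blocks E (V - Z)" "t \<noteq> seg_root E (V - Z) Rts I1" "I1 \<inter> t \<noteq> {}"
        "t \<noteq> seg_root E (V - Z) Rts I2" "I2 \<inter> t \<noteq> {}"
      unfolding seg_body_def by blast
    obtain R where R: "R \<in> Rts" "(bc_adj E (V - Z))\<^sup>*\<^sup>* (Inl t) (Inl R)" using T.root_ex[OF t(1)] by blast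
    have tn: "t \<notin> Rts"
    proof
      assume "t \<in> Rts"
      then have "seg_root E (V - Z) Rts I1 = t" using T.KEY1[OF c1(1) S1 t(1) t(3)] by simp
      then show False using t(2) by simp
    qed
    have rt: "(bc_adj E (V - Z))\<^sup>*\<^sup>* (Inl R) (Inl t)" using T.asym[OF R(2)] .
    have "gd (bc_adj E (V - Z)) (Inl R) (Inl t) \<noteq> 0"
    proof
      assume "gd (bc_adj E (V - Z)) (Inl R) (Inl t) = 0"
      then have "Inl t = Inl R" using gd5'[OF rt] by blast
      then show False using tn R(1) by simp
    qed
    then obtain m where m: "gd (bc_adj E (V - Z)) (Inl R) (Inl t) = Suc m" using not0_implies_Suc by blast
    obtain y where y: "(bc_adj E (V - Z))\<^sup>*\<^sup>* (Inl R) y" "bc_adj E (V - Z) y (Inl t)"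
        "gd (bc_adj E (V - Z)) (Inl R) y = m" using gd4[OF rt m] by blast
    obtain v where v: "y = Inr v" using adj_L'[of E "V - Z" y t] y(2) by blast
    have tv: "bc_adj E (V - Z) (Inl t) (Inr v)" using adj_sym y(2) v by blast
    have dv: "Suc (gd (bc_adj E (V - Z)) (Inl R) (Inr v)) = gd (bc_adj E (V - Z)) (Inl R) (Inl t)"
      using y(3) m v by simp
    have v1: "v \<in> I1"
    proof (rule ccontr)
      assume "v \<notin> I1"
      then have "seg_root E (V - Z) Rts I1 = t" using T.KEY2[OF c1(1) S1 t(1) t(3) R tv dv] by simp
      then show False using t(2) by simp
    qed
    have v2: "v \<in> I2"
    proof (rule ccontr)
      assume "v \<notin> I2"
      then have "seg_root E (V - Z) Rts I2 = t" using T.KEY2[OF c2(1) S2 t(1) t(5) R tv dv] by simp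
      then show False using t(4) by simp
    qed
    show False using disj v1 v2 by blast
  qed
qed

end
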